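(* For every $n\ge 1$ let $H_n$ and $P_n$ denote the numbers of tilings of the regions $H_n$ and $P_n$ (defined in the context). Then $H_1=1$, $H_2=3$, $P_1=1$, $P_2=2$, and for all $n\ge 2$ $$H_n=H_{n-1}+2P_{n-1},\qquad P_n=H_{n-1}+P_{n-1}.$$ Consequently, for all $n\ge 3$, $H_n=2H_{n-1}+H_{n-2}$ and $P_n=2P_{n-1}+P_{n-2}$. In particular $(P_n)_{n\ge1}=(1,2,5,12,29,70,\dots)$ is the sequence of Pell numbers and $(H_n)_{n\ge1}=(1,3,7,17,41,99,\dots)$, i.e. for all $n\ge1$ $$P_n=\frac{(1+\sqrt2)^n-(1-\sqrt2)^n}{2\sqrt2},\qquad H_n=\frac{(1+\sqrt2)^n+(1-\sqrt2)^n}{2}.$$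
   Context: Let $s=\sqrt3/2$. Consider the standard triangular lattice in the plane whose vertices are the points $(a+b/2,\,bs)$ with $a,b\in\mathbb Z$ and whose edges are the unit segments joining lattice points in the directions $0^\circ,60^\circ,120^\circ$; it divides the plane into unit equilateral triangles called cells. A small tile is a single cell; a large tile is an equilateral triangle of side $2$ whose vertices are lattice points (so it is a union of $4$ cells; it may point up or down). For a region $R$ that is a finite union of cells, a tiling of $R$ is a finite set of small and large tiles, each contained in $R$, with pairwise disjoint interiors and union equal to $R$. For $n\ge1$, the region $H_n$ is the union of the trapezoid with vertices $(0,0),(n,0),(n-\tfrac12,s),(\tfrac12,s)$ and the trapezoid with vertices $(\tfrac12,s),(n-\tfrac12,s),(n,2s),(0,2s)$ (for $n=1$ these degenerate to two unit triangles meeting at a single point); $H_n$ consists of $4n-2$ cells. The region $P_n$ is $H_n$ with the cell with vertices $(n-1,0),(n,0),(n-\tfrac12,s)$ removed ($4n-3$ cells). By abuse of notation, $H_n$ and $P_n$ also denote the number of tilings of these regions. *)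

theory Defs
  imports Complex_Main
begin

text \<open>Lattice point (a,b) in lattice coordinates is the
  plane point (a + b/2, b*sqrt 3/2).  The cell (a,b,True) is the up-pointing unit triangle
  with vertices (a,b),(a+1,b),(a,b+1); the cell (a,b,False) is the down-pointing unit
  triangle with vertices (a+1,b),(a,b+1),(a+1,b+1).  Every cell arises uniquely this way.\<close>

type_synonym cell = "int \<times> int \<times> bool"

definition up :: "int \<Rightarrow> int \<Rightarrow> cell" where "up a b = (a, b, True)"
definition dn :: "int \<Rightarrow> int \<Rightarrow> cell" where "dn a b = (a, b, False)"

text \<open>A tile is identified with the set of cells it covers.  Small tiles: single cells.
  Large up tile with vertices (a,b),(a+2,b),(a,b+2); large down tile with vertices
  (a+2,b),(a,b+2),(a+2,b+2).\<close>

definition small_tiles :: "cell set set" where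
  "small_tiles = {{c} | c. True}"

definition large_tiles :: "cell set set" where
  "large_tiles =
     {{up a b, up (a+1) b, up a (b+1), dn a b} | a b. True} \<union>
     {{dn (a+1) b, dn a (b+1), dn (a+1) (b+1), up (a+1) (b+1)} | a b. True}"

definition is_tile :: "cell set \<Rightarrow> bool" where
  "is_tile t \<longleftrightarrow> t \<in> small_tiles \<union> large_tiles"

text \<open>Tilings: finite sets of tiles contained in R, with pairwise disjoint interiors
  (equivalently disjoint cell sets), whose union is R.\<close>

definition is_tiling :: "cell set \<Rightarrow> cell set set \<Rightarrow> bool" where
  "is_tiling R T \<longleftrightarrow> finite T \<and> (\<forall>t\<in>T. is_tile t \<and> t \<subseteq> R)
     \<and> (\<forall>t\<in>T. \<forall>u\<in>T. t \<noteq> u \<longrightarrow> t \<inter> u = {}) \<and> \<Union>T = R"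

definition num_tilings :: "cell set \<Rightarrow> nat" where
  "num_tilings R = card {T. is_tiling R T}"

definition H_region :: "nat \<Rightarrow> cell set" where
  "H_region n =
     {up a 0 | a. 0 \<le> a \<and> a \<le> int n - 1} \<union>
     {dn a 0 | a. 0 \<le> a \<and> a \<le> int n - 2} \<union>
     {dn a 1 | a. -1 \<le> a \<and> a \<le> int n - 2} \<union>
     {up a 1 | a. 0 \<le> a \<and> a \<le> int n - 2}"

text \<open>P_n: H_n minus the cell with vertices (n-1,0),(n,0),(n-1/2,s).\<close>

definition P_region :: "nat \<Rightarrow> cell set" where
  "P_region n = H_region n - {up (int n - 1) 0}"

definition Hn :: "nat \<Rightarrow> nat" where "Hn n = num_tilings (H_region n)"
definition Pn :: "nat \<Rightarrow> nat" where "Pn n = num_tilings (P_region n)"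

end

theory Submission
  imports Defs
begin


definition LU :: "int \<Rightarrow> int \<Rightarrow> cell set" where
  "LU a b = {(a,b,True),(a+1,b,True),(a,b+1,True),(a,b,False)}"
definition LD :: "int \<Rightarrow> int \<Rightarrow> cell set" where
  "LD a b = {(a+1,b,False),(a,b+1,False),(a+1,b+1,False),(a+1,b+1,True)}"

lemma large_iff: "t \<in> large_tiles \<longleftrightarrow> (\<exists>a b. t = LU a b) \<or> (\<exists>a b. t = LD a b)"
  unfolding large_tiles_def LU_def LD_def up_def dn_def by auto

lemma two_elems: "t \<in> large_tiles \<Longrightarrow> \<exists>x y. x \<in> t \<and> y \<in> t \<and> x \<noteq> y"
proof -
  assume "t \<in> large_tiles"
  then consider a b where "t = LU a b" | a b where "t = LD a b" unfolding large_iff by blast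
  then show ?thesis
  proof cases
    case (1 a b) then show ?thesis by (rule_tac x="(a,b,True)" in exI, rule_tac x="(a+1,b,True)" in exI) (simp add: LU_def)
  next
    case (2 a b) then show ?thesis by (rule_tac x="(a+1,b,False)" in exI, rule_tac x="(a,b+1,False)" in exI) (simp add: LD_def)
  qed
qed

lemma large_not_small: "t \<in> large_tiles \<Longrightarrow> t \<notin> small_tiles"
proof
  assume "t \<in> large_tiles" "t \<in> small_tiles"
  then obtain x y where "x \<in> t" "y \<in> t" "x \<noteq> y" using two_elems by blast
  moreover obtain c where "t = {c}" using \<open>t \<in> small_tiles\<close> unfolding small_tiles_def by blast
  ultimately show False by blast
qed

definition fams :: "cell set set \<Rightarrow> cell set set set" where
  "fams S = {L. L \<subseteq> S \<and> pairwise disjnt L}"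

lemma tiling_tile: "is_tiling R T \<Longrightarrow> t \<in> T \<Longrightarrow> is_tile t \<and> t \<subseteq> R"
  unfolding is_tiling_def by blast
lemma tiling_disj: "is_tiling R T \<Longrightarrow> t \<in> T \<Longrightarrow> u \<in> T \<Longrightarrow> t \<noteq> u \<Longrightarrow> t \<inter> u = {}"
  unfolding is_tiling_def by blast
lemma tiling_union: "is_tiling R T \<Longrightarrow> \<Union>T = R"
  unfolding is_tiling_def by blast
lemma small_or_large: "is_tile t \<Longrightarrow> t \<notin> large_tiles \<Longrightarrow> \<exists>c. t = {c}"
  unfolding is_tile_def small_tiles_def by blast

lemma tiling_decomp:
  assumes "is_tiling R T"
  shows "T = (T \<inter> large_tiles) \<union> (\<lambda>c. {c}) ` (R - \<Union>(T \<inter> large_tiles))"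
proof
  show "T \<subseteq> (T \<inter> large_tiles) \<union> (\<lambda>c. {c}) ` (R - \<Union>(T \<inter> large_tiles))"
  proof
    fix t assume t: "t \<in> T"
    show "t \<in> (T \<inter> large_tiles) \<union> (\<lambda>c. {c}) ` (R - \<Union>(T \<inter> large_tiles))"
    proof (cases "t \<in> large_tiles")
      case True then show ?thesis using t by blast
    next
      case False
      have tt: "is_tile t" "t \<subseteq> R" using tiling_tile[OF assms t] by auto
      then obtain c where c: "t = {c}" using small_or_large False by blast
      have "c \<in> R" using tt c by blast
      moreover have "c \<notin> \<Union>(T \<inter> large_tiles)"
      proof
        assume "c \<in> \<Union>(T \<inter> large_tiles)"
        then obtain t' where t': "t' \<in> T" "t' \<in> large_tiles" "c \<in> t'" by blast
        moreover have "t' \<noteq> t" using False \<open>t' \<in> large_tiles\<close> by blast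
        ultimately have "t' \<inter> t = {}" using tiling_disj[OF assms] t by blast
        then show False using t' c by blast
      qed
      ultimately show ?thesis using c by blast
    qed
  qed
next
  show "(T \<inter> large_tiles) \<union> (\<lambda>c. {c}) ` (R - \<Union>(T \<inter> large_tiles)) \<subseteq> T"
  proof
    fix x assume "x \<in> (T \<inter> large_tiles) \<union> (\<lambda>c. {c}) ` (R - \<Union>(T \<inter> large_tiles))"
    then show "x \<in> T"
    proof
      assume "x \<in> T \<inter> large_tiles" then show ?thesis by blast
    next
      assume "x \<in> (\<lambda>c. {c}) ` (R - \<Union>(T \<inter> large_tiles))"
      then obtain c where c: "x = {c}" "c \<in> R" "c \<notin> \<Union>(T \<inter> large_tiles)" by blast
      then have "c \<in> \<Union>T" using tiling_union[OF assms] by blast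
      then obtain t where t: "t \<in> T" "c \<in> t" by blast
      then have "t \<notin> large_tiles" using c by blast
      then obtain c' where "t = {c'}" using small_or_large tiling_tile[OF assms t(1)] by blast
      then show "x \<in> T" using t c by blast
    qed
  qed
qed

lemma num_tilings_eq:
  assumes "finite R"
  shows "num_tilings R = card (fams {t\<in>large_tiles. t \<subseteq> R})"
proof -
  let ?g = "\<lambda>L. L \<union> (\<lambda>c. {c}) ` (R - \<Union>L)"
  have small_sing: "(\<lambda>c. {c}) ` X \<inter> large_tiles = {}" for X
    using large_not_small unfolding small_tiles_def by blast
  have "bij_betw (\<lambda>T. T \<inter> large_tiles) {T. is_tiling R T} (fams {t\<in>large_tiles. t \<subseteq> R})"
  proof (rule bij_betw_byWitness[where f'="?g"])
    show "\<forall>T\<in>{T. is_tiling R T}. ?g (T \<inter> large_tiles) = T"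
    proof
      fix T assume "T \<in> {T. is_tiling R T}"
      then have "is_tiling R T" by simp
      from tiling_decomp[OF this] show "?g (T \<inter> large_tiles) = T" by simp
    qed
    show "\<forall>L\<in>fams {t\<in>large_tiles. t \<subseteq> R}. ?g L \<inter> large_tiles = L"
    proof
      fix L assume "L \<in> fams {t\<in>large_tiles. t \<subseteq> R}"
      then have "L \<subseteq> large_tiles" unfolding fams_def by blast
      then show "?g L \<inter> large_tiles = L" using small_sing by blast
    qed
    show "(\<lambda>T. T \<inter> large_tiles) ` {T. is_tiling R T} \<subseteq> fams {t\<in>large_tiles. t \<subseteq> R}"
    proof
      fix L assume "L \<in> (\<lambda>T. T \<inter> large_tiles) ` {T. is_tiling R T}"
      then obtain T where T: "is_tiling R T" "L = T \<inter> large_tiles" by blast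
      have "L \<subseteq> {t\<in>large_tiles. t \<subseteq> R}" using T tiling_tile[OF T(1)] by blast
      moreover have "pairwise disjnt L"
        unfolding pairwise_def disjnt_def using T tiling_disj[OF T(1)] by blast
      ultimately show "L \<in> fams {t\<in>large_tiles. t \<subseteq> R}" unfolding fams_def by blast
    qed
    show "?g ` fams {t\<in>large_tiles. t \<subseteq> R} \<subseteq> {T. is_tiling R T}"
    proof
      fix T assume "T \<in> ?g ` fams {t\<in>large_tiles. t \<subseteq> R}"
      then obtain L where L: "L \<in> fams {t\<in>large_tiles. t \<subseteq> R}" and TL: "T = ?g L" by blast
      have sub: "L \<subseteq> large_tiles" "\<forall>t\<in>L. t \<subseteq> R" and pw: "pairwise disjnt L"
        using L unfolding fams_def by auto
      have "L \<subseteq> Pow R" using sub by blast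
      then have "finite L" using assms by (meson finite_Pow_iff rev_finite_subset)
      have "is_tiling R (?g L)"
        unfolding is_tiling_def
      proof (intro conjI)
        show "finite (?g L)" using \<open>finite L\<close> assms by simp
        show "\<forall>t\<in>?g L. is_tile t \<and> t \<subseteq> R"
        proof
          fix t assume "t \<in> ?g L"
          then show "is_tile t \<and> t \<subseteq> R"
          proof
            assume "t \<in> L" then show ?thesis using sub unfolding is_tile_def by blast
          next
            assume "t \<in> (\<lambda>c. {c}) ` (R - \<Union>L)"
            then obtain c where "t = {c}" "c \<in> R" by blast
            then show ?thesis unfolding is_tile_def small_tiles_def by blast
          qed
        qed
        show "\<forall>t\<in>?g L. \<forall>u\<in>?g L. t \<noteq> u \<longrightarrow> t \<inter> u = {}"
        proof (intro ballI impI)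
          fix t u assume t: "t \<in> ?g L" and u: "u \<in> ?g L" and tu: "t \<noteq> u"
          show "t \<inter> u = {}"
          proof (cases "t \<in> L")
            case True
            show ?thesis
            proof (cases "u \<in> L")
              case True
              with \<open>t \<in> L\<close> tu pw show ?thesis unfolding pairwise_def disjnt_def by blast
            next
              case False
              then obtain c where "u = {c}" "c \<notin> \<Union>L" using u by blast
              then show ?thesis using \<open>t \<in> L\<close> by blast
            qed
          next
            case False
            then obtain c where c: "t = {c}" "c \<notin> \<Union>L" using t by blast
            show ?thesis
            proof (cases "u \<in> L")
              case True
              then show ?thesis using c by blast
            next
              case False
              then obtain d where "u = {d}" using u by blast
              then show ?thesis using c tu by blast
            qed
          qed
        qed
        show "\<Union>(?g L) = R" using sub by blast
      qed
      then show "T \<in> {T. is_tiling R T}" using TL by simp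
    qed
  qed
  then show ?thesis unfolding num_tilings_def by (simp add: bij_betw_same_card)
qed



definition Cfg :: "nat \<Rightarrow> bool \<Rightarrow> bool \<Rightarrow> (nat set \<times> nat set) set" where
  "Cfg m ea eb = {(A,B). A \<subseteq> {..<m} \<and> B \<subseteq> {..<m} \<and> A \<inter> B = {}
     \<and> (\<forall>c\<in>A. Suc c \<notin> A) \<and> (\<forall>c\<in>B. Suc c \<notin> B) \<and> (ea \<longrightarrow> m - 1 \<notin> A) \<and> (eb \<longrightarrow> m - 1 \<notin> B)}"

lemma Cfg_mem: "(A,B) \<in> Cfg m ea eb \<longleftrightarrow> A \<subseteq> {..<m} \<and> B \<subseteq> {..<m} \<and> A \<inter> B = {}
     \<and> (\<forall>c\<in>A. Suc c \<notin> A) \<and> (\<forall>c\<in>B. Suc c \<notin> B) \<and> (ea \<longrightarrow> m - 1 \<notin> A) \<and> (eb \<longrightarrow> m - 1 \<notin> B)"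
  unfolding Cfg_def by simp

lemma up2: assumes "(A,B) \<in> Cfg m True False" shows "(insert m A,B) \<in> Cfg (Suc m) False eb"
proof -
  have h: "A \<subseteq> {..<m}" "B \<subseteq> {..<m}" "A \<inter> B = {}" "\<forall>c\<in>A. Suc c \<notin> A" "\<forall>c\<in>B. Suc c \<notin> B" "m - 1 \<notin> A"
    using assms unfolding Cfg_mem by auto
  have mB: "m \<notin> B" using h(2) by auto
  have mA: "m \<notin> A" "Suc m \<notin> A" using h(1) by auto
  have c1: "insert m A \<subseteq> {..<Suc m}" using h(1) by auto
  have c2: "B \<subseteq> {..<Suc m}" using h(2) by auto
  have c3: "insert m A \<inter> B = {}" using h(3) mB by auto
  have c4: "\<forall>c\<in>insert m A. Suc c \<notin> insert m A"
  proof
    fix c assume c: "c \<in> insert m A"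
    show "Suc c \<notin> insert m A"
    proof (cases "c = m")
      case True then show ?thesis using mA by simp
    next
      case False
      then have "c \<in> A" using c by simp
      then have "Suc c \<noteq> m" using h(6) by (metis diff_Suc_1)
      then show ?thesis using h(4) \<open>c \<in> A\<close> by simp
    qed
  qed
  show ?thesis unfolding Cfg_mem using c1 c2 c3 c4 h(5) mB by simp
qed

lemma down2: assumes "(A,B) \<in> Cfg (Suc m) ea eb" "m \<in> A"
  shows "(A - {m},B) \<in> Cfg m True False \<and> \<not> ea \<and> m \<notin> B"
proof -
  have h: "A \<subseteq> {..<Suc m}" "B \<subseteq> {..<Suc m}" "A \<inter> B = {}" "\<forall>c\<in>A. Suc c \<notin> A" "\<forall>c\<in>B. Suc c \<notin> B"
     "ea \<longrightarrow> m \<notin> A" "eb \<longrightarrow> m \<notin> B"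
    using assms(1) unfolding Cfg_mem by auto
  have mB: "m \<notin> B" using h(3) assms(2) by auto
  have nea: "\<not> ea" using h(6) assms(2) by auto
  have c1: "A - {m} \<subseteq> {..<m}" using h(1) by (auto simp: less_Suc_eq)
  have c2: "B \<subseteq> {..<m}" using h(2) mB by (auto simp: less_Suc_eq)
  have c3: "(A - {m}) \<inter> B = {}" using h(3) by auto
  have c4: "\<forall>c\<in>A - {m}. Suc c \<notin> A - {m}" using h(4) by auto
  have c5: "m - 1 \<notin> A - {m}"
  proof (cases m)
    case 0 then show ?thesis by simp
  next
    case (Suc k)
    then have "k \<notin> A" using h(4) assms(2) by auto
    then show ?thesis using Suc by simp
  qed
  have "(A - {m},B) \<in> Cfg m True False" unfolding Cfg_mem using c1 c2 c3 c4 c5 h(5) by simp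
  then show ?thesis using nea mB by simp
qed

lemma Cfg_swap: "(A,B) \<in> Cfg m ea eb \<longleftrightarrow> (B,A) \<in> Cfg m eb ea"
  unfolding Cfg_mem by blast

lemma up1: "(A,B) \<in> Cfg m False False \<Longrightarrow> (A,B) \<in> Cfg (Suc m) ea eb"
  unfolding Cfg_mem by (auto simp: subset_eq)

lemma up3: "(A,B) \<in> Cfg m False True \<Longrightarrow> (A,insert m B) \<in> Cfg (Suc m) ea False"
  using up2[of B A m ea] Cfg_swap by blast

lemma down1: "(A,B) \<in> Cfg (Suc m) ea eb \<Longrightarrow> m \<notin> A \<Longrightarrow> m \<notin> B \<Longrightarrow> (A,B) \<in> Cfg m False False"
  unfolding Cfg_mem subset_eq lessThan_iff by (metis less_SucE)

lemma Cfg_m: "(A,B) \<in> Cfg m ea eb \<Longrightarrow> m \<notin> A \<and> m \<notin> B"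
  unfolding Cfg_mem by auto

lemma Cfg_0: "Cfg 0 ea eb = {({},{})}"
  unfolding Cfg_def by auto

lemma Cfg_sub: "Cfg m ea eb \<subseteq> Pow {..<m} \<times> Pow {..<m}"
  unfolding Cfg_def by blast
lemma Cfg_finite: "finite (Cfg m ea eb)"
  by (rule finite_subset[OF Cfg_sub]) simp

fun f :: "nat \<Rightarrow> bool \<Rightarrow> bool \<Rightarrow> nat" where
  "f 0 ea eb = 1"
| "f (Suc m) ea eb = f m False False + (if ea then 0 else f m True False) + (if eb then 0 else f m False True)"

lemma Cfg_Suc: "Cfg (Suc m) ea eb = Cfg m False False
   \<union> (if ea then {} else (\<lambda>(A,B). (insert m A, B)) ` Cfg m True False)
   \<union> (if eb then {} else (\<lambda>(A,B). (A, insert m B)) ` Cfg m False True)"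
  (is "_ = ?S1 \<union> ?S2 \<union> ?S3")
proof (intro equalityI subsetI)
  fix x assume x: "x \<in> Cfg (Suc m) ea eb"
  obtain A B where xAB: "x = (A,B)" by (cases x)
  have h: "(A,B) \<in> Cfg (Suc m) ea eb" using x xAB by simp
  show "x \<in> ?S1 \<union> ?S2 \<union> ?S3"
  proof (cases "m \<in> A")
    case True
    from down2[OF h True] have d: "(A - {m}, B) \<in> Cfg m True False" "\<not> ea" by auto
    have "x = (\<lambda>(A,B). (insert m A, B)) (A - {m}, B)" using True xAB by auto
    then have "x \<in> (\<lambda>(A,B). (insert m A, B)) ` Cfg m True False" using d(1) by (rule image_eqI)
    then have "x \<in> ?S2" using d(2) by simp
    then show ?thesis by blast
  next
    case False
    show ?thesis
    proof (cases "m \<in> B")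
      case True
      have h': "(B,A) \<in> Cfg (Suc m) eb ea" using h Cfg_swap by blast
      from down2[OF h' True] have d: "(B - {m}, A) \<in> Cfg m True False" "\<not> eb" by auto
      then have d': "(A, B - {m}) \<in> Cfg m False True" using Cfg_swap by blast
      have "x = (\<lambda>(A,B). (A, insert m B)) (A, B - {m})" using True xAB by auto
      then have "x \<in> (\<lambda>(A,B). (A, insert m B)) ` Cfg m False True" using d' by (rule image_eqI)
      then have "x \<in> ?S3" using d(2) by simp
      then show ?thesis by blast
    next
      case F2: False
      have "(A, B) \<in> Cfg m False False" using down1[OF h False F2] .
      then show ?thesis using xAB by simp
    qed
  qed
next
  fix x assume x: "x \<in> ?S1 \<union> ?S2 \<union> ?S3"
  obtain A B where xAB: "x = (A,B)" by (cases x)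
  from x show "x \<in> Cfg (Suc m) ea eb"
  proof (elim UnE)
    assume "x \<in> ?S1" then show ?thesis using up1 xAB by simp
  next
    assume "x \<in> ?S2"
    then obtain A' B' where "\<not> ea" "(A',B') \<in> Cfg m True False" "x = (insert m A', B')"
      by (auto split: if_splits)
    then show ?thesis using up2 by simp
  next
    assume "x \<in> ?S3"
    then obtain A' B' where "\<not> eb" "(A',B') \<in> Cfg m False True" "x = (A', insert m B')"
      by (auto split: if_splits)
    then show ?thesis using up3 by simp
  qed
qed

lemma ins_inj: "m \<notin> A \<Longrightarrow> m \<notin> A' \<Longrightarrow> insert m A = insert m A' \<Longrightarrow> A = A'"
  by (metis Diff_insert_absorb)

lemma card_Cfg: "card (Cfg m ea eb) = f m ea eb"
proof (induction m arbitrary: ea eb)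
  case 0 then show ?case by (simp add: Cfg_0)
next
  case (Suc m)
  let ?S1 = "Cfg m False False"
  let ?g2 = "\<lambda>(A,B). (insert m A, B)"
  let ?g3 = "\<lambda>(A,B). (A, insert m B)"
  let ?S2 = "(if ea then {} else ?g2 ` Cfg m True False)"
  let ?S3 = "(if eb then {} else ?g3 ` Cfg m False True)"
  have inj2: "inj_on ?g2 (Cfg m True False)"
  proof (rule inj_onI)
    fix x y assume xy: "x \<in> Cfg m True False" "y \<in> Cfg m True False" "?g2 x = ?g2 y"
    obtain a b where x: "x = (a,b)" by (cases x)
    obtain a' b' where y: "y = (a',b')" by (cases y)
    have "m \<notin> a" using Cfg_m[of a b m True False] xy(1) x by simp
    moreover have "m \<notin> a'" using Cfg_m[of a' b' m True False] xy(2) y by simp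
    moreover have "insert m a = insert m a'" "b = b'" using xy(3) x y by auto
    ultimately have "a = a'" using ins_inj by metis
    then show "x = y" using x y \<open>b = b'\<close> by simp
  qed
  have inj3: "inj_on ?g3 (Cfg m False True)"
  proof (rule inj_onI)
    fix x y assume xy: "x \<in> Cfg m False True" "y \<in> Cfg m False True" "?g3 x = ?g3 y"
    obtain a b where x: "x = (a,b)" by (cases x)
    obtain a' b' where y: "y = (a',b')" by (cases y)
    have "m \<notin> b" using Cfg_m[of a b m False True] xy(1) x by simp
    moreover have "m \<notin> b'" using Cfg_m[of a' b' m False True] xy(2) y by simp
    moreover have "insert m b = insert m b'" "a = a'" using xy(3) x y by auto
    ultimately have "b = b'" using ins_inj by metis
    then show "x = y" using x y \<open>a = a'\<close> by simp
  qed
  have c2: "card ?S2 = (if ea then 0 else f m True False)"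
    using card_image[OF inj2] Suc.IH by simp
  have c3: "card ?S3 = (if eb then 0 else f m False True)"
    using card_image[OF inj3] Suc.IH by simp
  have p1: "\<forall>x\<in>?S1. m \<notin> fst x \<and> m \<notin> snd x" using Cfg_m by auto
  have p2: "\<forall>x\<in>?S2. m \<in> fst x \<and> m \<notin> snd x" using Cfg_m by (auto split: if_splits)
  have p3: "\<forall>x\<in>?S3. m \<in> snd x" by (auto split: if_splits)
  have d12: "?S1 \<inter> ?S2 = {}" using p1 p2 by blast
  have d123: "(?S1 \<union> ?S2) \<inter> ?S3 = {}" using p1 p2 p3 by blast
  have fin: "finite ?S1" "finite ?S2" "finite ?S3" using Cfg_finite by auto
  have "card (Cfg (Suc m) ea eb) = card ?S1 + card ?S2 + card ?S3"
    unfolding Cfg_Suc using fin d12 d123 by (simp add: card_Un_disjoint)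
  then show ?case using c2 c3 Suc.IH by simp
qed

lemma f_sym: "f m True False = f m False True"
  by (induction m) auto



definition UU :: "nat \<Rightarrow> cell set" where "UU c = LU (int c) 0"
definition DD :: "nat \<Rightarrow> cell set" where "DD c = LD (int c - 1) 0"

lemma mem_H: "((a,b,u) \<in> H_region n) = ((b = 0 \<and> u \<and> 0 \<le> a \<and> a \<le> int n - 1) \<or> (b=0 \<and> \<not>u \<and> 0 \<le> a \<and> a \<le> int n - 2)
   \<or> (b=1 \<and> \<not>u \<and> -1 \<le> a \<and> a \<le> int n - 2) \<or> (b=1 \<and> u \<and> 0 \<le> a \<and> a \<le> int n - 2))"
  unfolding H_region_def up_def dn_def by auto

definition RR :: "nat \<Rightarrow> bool \<Rightarrow> cell set" where
  "RR m ea = (if ea then P_region (Suc m) else H_region (Suc m))"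

lemma mem_RR: "((a,b,u) \<in> RR m ea) = ((b = 0 \<and> u \<and> 0 \<le> a \<and> a \<le> int m - (if ea then 1 else 0)) \<or> (b=0 \<and> \<not>u \<and> 0 \<le> a \<and> a \<le> int m - 1)
   \<or> (b=1 \<and> \<not>u \<and> -1 \<le> a \<and> a \<le> int m - 1) \<or> (b=1 \<and> u \<and> 0 \<le> a \<and> a \<le> int m - 1))"
  unfolding RR_def P_region_def up_def by (auto simp: mem_H)

lemma LU_sub: "LU a b \<subseteq> RR m ea \<longleftrightarrow> b = 0 \<and> 0 \<le> a \<and> a \<le> int m - (if ea then 2 else 1)"
  unfolding LU_def by (auto simp: mem_RR)

lemma LD_sub: "LD a b \<subseteq> RR m ea \<longleftrightarrow> b = 0 \<and> -1 \<le> a \<and> a \<le> int m - 2"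
  unfolding LD_def by (auto simp: mem_RR)

lemma UU_large: "UU c \<in> large_tiles" unfolding UU_def large_iff by blast
lemma DD_large: "DD c \<in> large_tiles" unfolding DD_def large_iff by blast

lemma Lg_RR: "{t\<in>large_tiles. t \<subseteq> RR m ea} = UU ` {c. c < m \<and> (ea \<longrightarrow> c \<noteq> m - 1)} \<union> DD ` {..<m}"
proof (intro equalityI subsetI)
  fix t assume t: "t \<in> {t\<in>large_tiles. t \<subseteq> RR m ea}"
  then have tl: "t \<in> large_tiles" and ts: "t \<subseteq> RR m ea" by auto
  from tl consider a b where "t = LU a b" | a b where "t = LD a b" unfolding large_iff by blast
  then show "t \<in> UU ` {c. c < m \<and> (ea \<longrightarrow> c \<noteq> m - 1)} \<union> DD ` {..<m}"
  proof cases
    case (1 a b)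
    then have h: "b = 0" "0 \<le> a" "a \<le> int m - (if ea then 2 else 1)" using ts LU_sub by auto
    then have "t = UU (nat a)" using 1 by (simp add: UU_def)
    moreover have "nat a < m \<and> (ea \<longrightarrow> nat a \<noteq> m - 1)" using h by (cases ea) auto
    ultimately show ?thesis by blast
  next
    case (2 a b)
    then have h: "b = 0" "-1 \<le> a" "a \<le> int m - 2" using ts LD_sub by auto
    then have "t = DD (nat (a+1))" using 2 by (simp add: DD_def)
    moreover have "nat (a+1) < m" using h by auto
    ultimately show ?thesis by blast
  qed
next
  fix t assume "t \<in> UU ` {c. c < m \<and> (ea \<longrightarrow> c \<noteq> m - 1)} \<union> DD ` {..<m}"
  then show "t \<in> {t\<in>large_tiles. t \<subseteq> RR m ea}"
  proof
    assume "t \<in> UU ` {c. c < m \<and> (ea \<longrightarrow> c \<noteq> m - 1)}"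
    then obtain c where c: "t = UU c" "c < m" "ea \<longrightarrow> c \<noteq> m - 1" by blast
    have "UU c \<subseteq> RR m ea" unfolding UU_def LU_sub using c(2,3) by (cases ea) auto
    then show ?thesis using c UU_large by simp
  next
    assume "t \<in> DD ` {..<m}"
    then obtain c where c: "t = DD c" "c < m" by blast
    have "DD c \<subseteq> RR m ea" unfolding DD_def LD_sub using c(2) by auto
    then show ?thesis using c DD_large by simp
  qed
qed

lemma UU_inj: "UU a = UU b \<longleftrightarrow> a = b"
proof
  assume e: "UU a = UU b"
  have "(int a, 0, False) \<in> UU a" unfolding UU_def LU_def by simp
  then have "(int a, 0, False) \<in> UU b" using e by simp
  then show "a = b" unfolding UU_def LU_def by auto
qed simp

lemma DD_inj: "DD a = DD b \<longleftrightarrow> a = b"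
proof
  assume e: "DD a = DD b"
  have "(int a, 0, False) \<in> DD a" unfolding DD_def LD_def by simp
  then have "(int a, 0, False) \<in> DD b" using e by simp
  then show "a = b" unfolding DD_def LD_def by auto
qed simp

lemma UU_DD: "UU a \<noteq> DD b"
proof
  assume "UU a = DD b"
  then have "(int a, 0, True) \<in> DD b" unfolding UU_def LU_def by auto
  then show False unfolding DD_def LD_def by auto
qed

lemma disj_UU: "disjnt (UU a) (UU b) \<longleftrightarrow> a \<noteq> b \<and> Suc a \<noteq> b \<and> Suc b \<noteq> a"
  unfolding disjnt_def UU_def LU_def by auto

lemma disj_DD: "disjnt (DD a) (DD b) \<longleftrightarrow> a \<noteq> b \<and> Suc a \<noteq> b \<and> Suc b \<noteq> a"
  unfolding disjnt_def DD_def LD_def by auto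

lemma disj_UD: "disjnt (UU a) (DD b) \<longleftrightarrow> a \<noteq> b"
  unfolding disjnt_def DD_def LD_def UU_def LU_def by auto



lemma DD_UU: "DD b \<noteq> UU a" using UU_DD by metis

lemma cfg_fams:
  "card (Cfg m ea False) = card (fams (UU ` {c. c < m \<and> (ea \<longrightarrow> c \<noteq> m - 1)} \<union> DD ` {..<m}))"
  (is "_ = card (fams ?S)")
proof -
  let ?phi = "\<lambda>(A,B). UU ` A \<union> DD ` B"
  let ?psi = "\<lambda>L. ({c. UU c \<in> L}, {c. DD c \<in> L})"
  have "bij_betw ?phi (Cfg m ea False) (fams ?S)"
  proof (rule bij_betw_byWitness[where f'="?psi"])
    show "\<forall>x\<in>Cfg m ea False. ?psi (?phi x) = x"
    proof
      fix x assume "x \<in> Cfg m ea False"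
      obtain A B where x: "x = (A,B)" by (cases x)
      have "{c. UU c \<in> UU ` A \<union> DD ` B} = A" using UU_inj DD_UU UU_DD by auto
      moreover have "{c. DD c \<in> UU ` A \<union> DD ` B} = B" using DD_inj UU_DD DD_UU by auto
      ultimately show "?psi (?phi x) = x" using x by simp
    qed
    show "\<forall>L\<in>fams ?S. ?phi (?psi L) = L"
    proof
      fix L assume "L \<in> fams ?S"
      then have sub: "L \<subseteq> ?S" unfolding fams_def by blast
      have "?phi (?psi L) = UU ` {c. UU c \<in> L} \<union> DD ` {c. DD c \<in> L}" by simp
      also have "\<dots> = L"
      proof (intro equalityI subsetI)
        fix t assume "t \<in> UU ` {c. UU c \<in> L} \<union> DD ` {c. DD c \<in> L}"
        then show "t \<in> L" by blast
      next
        fix t assume t: "t \<in> L"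
        then have "t \<in> ?S" using sub by blast
        then show "t \<in> UU ` {c. UU c \<in> L} \<union> DD ` {c. DD c \<in> L}" using t by blast
      qed
      finally show "?phi (?psi L) = L" .
    qed
    show "?phi ` Cfg m ea False \<subseteq> fams ?S"
    proof
      fix L assume "L \<in> ?phi ` Cfg m ea False"
      then obtain y where y: "y \<in> Cfg m ea False" "L = ?phi y" by blast
      obtain A B where yAB: "y = (A,B)" by (cases y)
      have AB: "(A,B) \<in> Cfg m ea False" and L: "L = UU ` A \<union> DD ` B" using y yAB by simp_all
      have h: "A \<subseteq> {..<m}" "B \<subseteq> {..<m}" "A \<inter> B = {}" "\<forall>c\<in>A. Suc c \<notin> A" "\<forall>c\<in>B. Suc c \<notin> B" "ea \<longrightarrow> m - 1 \<notin> A"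
        using AB unfolding Cfg_mem by auto
      have "A \<subseteq> {c. c < m \<and> (ea \<longrightarrow> c \<noteq> m - 1)}" using h(1,6) by auto
      then have "UU ` A \<subseteq> UU ` {c. c < m \<and> (ea \<longrightarrow> c \<noteq> m - 1)}" by (rule image_mono)
      moreover have "DD ` B \<subseteq> DD ` {..<m}" using h(2) by (rule image_mono)
      ultimately have sub: "L \<subseteq> ?S" using L by blast
      have pw: "pairwise disjnt L"
        unfolding pairwise_def
      proof (intro ballI impI)
        fix t u assume t: "t \<in> L" and u: "u \<in> L" and tu: "t \<noteq> u"
        show "disjnt t u"
        proof (cases "t \<in> UU ` A")
          case True
          then obtain a where a: "t = UU a" "a \<in> A" by blast
          show ?thesis
          proof (cases "u \<in> UU ` A")
            case True
            then obtain b where b: "u = UU b" "b \<in> A" by blast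
            then show ?thesis using a tu h(4) disj_UU by auto
          next
            case False
            then obtain b where b: "u = DD b" "b \<in> B" using u L by blast
            then show ?thesis using a h(3) disj_UD by auto
          qed
        next
          case False
          then obtain a where a: "t = DD a" "a \<in> B" using t L by blast
          show ?thesis
          proof (cases "u \<in> UU ` A")
            case True
            then obtain b where b: "u = UU b" "b \<in> A" by blast
            have "b \<noteq> a" using a b h(3) by blast
            then have "disjnt u t" using a b disj_UD by simp
            then show ?thesis by (rule disjnt_sym)
          next
            case False
            then obtain b where b: "u = DD b" "b \<in> B" using u L by blast
            then show ?thesis using a tu h(5) disj_DD by auto
          qed
        qed
      qed
      show "L \<in> fams ?S" unfolding fams_def using sub pw by blast
    qed
    show "?psi ` fams ?S \<subseteq> Cfg m ea False"
    proof
      fix x assume "x \<in> ?psi ` fams ?S"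
      then obtain L where L: "L \<in> fams ?S" and x: "x = ?psi L" by blast
      have sub: "L \<subseteq> ?S" and pw: "pairwise disjnt L" using L unfolding fams_def by auto
      have a1: "c < m \<and> (ea \<longrightarrow> c \<noteq> m - 1)" if "UU c \<in> L" for c
      proof -
        have "UU c \<in> ?S" using that sub by blast
        then have "UU c \<in> UU ` {c. c < m \<and> (ea \<longrightarrow> c \<noteq> m - 1)}" using UU_DD by blast
        then show ?thesis using UU_inj by auto
      qed
      have b1: "c < m" if "DD c \<in> L" for c
      proof -
        have "DD c \<in> ?S" using that sub by blast
        then have "DD c \<in> DD ` {..<m}" using DD_UU by blast
        then show ?thesis using DD_inj by auto
      qed
      have c3: "{c. UU c \<in> L} \<inter> {c. DD c \<in> L} = {}"
      proof (rule ccontr)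
        assume "{c. UU c \<in> L} \<inter> {c. DD c \<in> L} \<noteq> {}"
        then obtain c where "UU c \<in> L" "DD c \<in> L" by blast
        then have "disjnt (UU c) (DD c)" using pairwiseD[OF pw] UU_DD by metis
        then show False using disj_UD by simp
      qed
      have c4: "\<forall>c\<in>{c. UU c \<in> L}. Suc c \<notin> {c. UU c \<in> L}"
      proof (intro ballI notI)
        fix c assume "c \<in> {c. UU c \<in> L}" "Suc c \<in> {c. UU c \<in> L}"
        moreover have "UU c \<noteq> UU (Suc c)" by (simp add: UU_inj)
        ultimately have "disjnt (UU c) (UU (Suc c))" using pw unfolding pairwise_def by simp
        then show False using disj_UU by simp
      qed
      have c5: "\<forall>c\<in>{c. DD c \<in> L}. Suc c \<notin> {c. DD c \<in> L}"
      proof (intro ballI notI)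
        fix c assume "c \<in> {c. DD c \<in> L}" "Suc c \<in> {c. DD c \<in> L}"
        moreover have "DD c \<noteq> DD (Suc c)" by (simp add: DD_inj)
        ultimately have "disjnt (DD c) (DD (Suc c))" using pw unfolding pairwise_def by simp
        then show False using disj_DD by simp
      qed
      have c1: "{c. UU c \<in> L} \<subseteq> {..<m}" using a1 by blast
      have c2: "{c. DD c \<in> L} \<subseteq> {..<m}" using b1 by blast
      have c6: "ea \<longrightarrow> m - 1 \<notin> {c. UU c \<in> L}" using a1 by blast
      have "({c. UU c \<in> L}, {c. DD c \<in> L}) \<in> Cfg m ea False"
        by (subst Cfg_mem) (intro conjI; (rule c1 c2 c3 c4 c5 c6 | simp))
      then show "x \<in> Cfg m ea False" using x by simp
    qed
  qed
  then show ?thesis by (rule bij_betw_same_card)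
qed

lemma RR_finite: "finite (RR m ea)"
proof (rule finite_subset)
  show "RR m ea \<subseteq> {-1..int m} \<times> {0..1} \<times> UNIV"
  proof
    fix x assume "x \<in> RR m ea"
    moreover obtain a b u where "x = (a,b,u)" by (cases x) auto
    ultimately show "x \<in> {-1..int m} \<times> {0..1} \<times> UNIV" by (auto simp: mem_RR split: if_splits)
  qed
qed simp

lemma count_RR: "num_tilings (RR m ea) = f m ea False"
  using num_tilings_eq[OF RR_finite] Lg_RR cfg_fams card_Cfg by simp

lemma Hn_f: "Hn (Suc m) = f m False False"
  using count_RR[of m False] unfolding Hn_def RR_def by simp
lemma Pn_f: "Pn (Suc m) = f m True False"
  using count_RR[of m True] unfolding Pn_def RR_def by simp


lemma f_rec_H: "f (Suc k) False False = f k False False + 2 * f k True False"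
  using f_sym[of k] by simp
lemma f_rec_P: "f (Suc k) True False = f k False False + f k True False"
  using f_sym[of k] by simp

lemma closed:
  "real (f k True False) = ((1 + sqrt 2) ^ Suc k - (1 - sqrt 2) ^ Suc k) / (2 * sqrt 2)
   \<and> real (f k False False) = ((1 + sqrt 2) ^ Suc k + (1 - sqrt 2) ^ Suc k) / 2"
proof (induction k)
  case 0
  have s: "sqrt 2 \<noteq> (0::real)" by simp
  show ?case using s by (simp add: field_simps)
next
  case (Suc k)
  define s where "s = sqrt (2::real)"
  define X where "X = (1 + s) ^ Suc k"
  define Y where "Y = (1 - s) ^ Suc k"
  have s0: "s \<noteq> 0" unfolding s_def by simp
  have ss: "s * s = 2" unfolding s_def by simp
  have IH: "real (f k True False) = (X - Y) / (2 * s)" "real (f k False False) = (X + Y) / 2"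
    using Suc.IH unfolding X_def Y_def s_def by auto
  have P: "real (f (Suc k) True False) = (X + Y) / 2 + (X - Y) / (2 * s)"
    by (simp only: f_rec_P[of k] of_nat_add IH)
  have H: "real (f (Suc k) False False) = (X + Y) / 2 + 2 * ((X - Y) / (2 * s))"
    by (simp only: f_rec_H[of k] of_nat_add of_nat_mult of_nat_numeral IH)
  have e1: "(X + Y) / 2 + (X - Y) / (2 * s) = ((1 + s) * X - (1 - s) * Y) / (2 * s)"
    using s0 by (simp add: field_simps)
  have e2: "(X + Y) / 2 + 2 * ((X - Y) / (2 * s)) = ((1 + s) * X + (1 - s) * Y) / 2"
  proof -
    have "(X + Y) / 2 + 2 * ((X - Y) / (2 * s)) = (X + Y) / 2 + (X - Y) * s / 2"
    proof -
      have inv: "1 / s = s / 2" using s0 ss by (simp add: field_simps)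
      have "2 * ((X - Y) / (2 * s)) = (X - Y) * (1 / s)" using s0 by (simp add: field_simps)
      also have "\<dots> = (X - Y) * s / 2" unfolding inv by simp
      finally show ?thesis by simp
    qed
    also have "\<dots> = ((1 + s) * X + (1 - s) * Y) / 2" by (simp add: field_simps)
    finally show ?thesis .
  qed
  have pw: "(1 + s) ^ Suc (Suc k) = (1 + s) * X" "(1 - s) ^ Suc (Suc k) = (1 - s) * Y"
    unfolding X_def Y_def by simp_all
  have G1: "real (f (Suc k) True False) = ((1 + s) ^ Suc (Suc k) - (1 - s) ^ Suc (Suc k)) / (2 * s)"
    unfolding pw by (rule trans[OF P e1])
  have G2: "real (f (Suc k) False False) = ((1 + s) ^ Suc (Suc k) + (1 - s) ^ Suc (Suc k)) / 2"
    unfolding pw by (rule trans[OF H e2])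
  show ?case using G1 G2 unfolding s_def by (rule conjI)
qed

theorem theorem1:
  shows "Hn 1 = 1 \<and> Hn 2 = 3 \<and> Pn 1 = 1 \<and> Pn 2 = 2
    \<and> (\<forall>n\<ge>2. Hn n = Hn (n - 1) + 2 * Pn (n - 1) \<and> Pn n = Hn (n - 1) + Pn (n - 1))
    \<and> (\<forall>n\<ge>3. Hn n = 2 * Hn (n - 1) + Hn (n - 2) \<and> Pn n = 2 * Pn (n - 1) + Pn (n - 2))
    \<and> (\<forall>n\<ge>1. real (Pn n) = ((1 + sqrt 2) ^ n - (1 - sqrt 2) ^ n) / (2 * sqrt 2)
              \<and> real (Hn n) = ((1 + sqrt 2) ^ n + (1 - sqrt 2) ^ n) / 2)"
proof (intro conjI allI impI)
  show "Hn 1 = 1" using Hn_f[of 0] by simp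
  show "Hn 2 = 3" using Hn_f[of 1] by (simp add: numeral_2_eq_2 f_sym)
  show "Pn 1 = 1" using Pn_f[of 0] by simp
  show "Pn 2 = 2" using Pn_f[of 1] by (simp add: numeral_2_eq_2)
next
  fix n :: nat assume "2 \<le> n"
  then have "\<exists>k. n = Suc (Suc k)" by presburger
  then obtain k where n: "n = Suc (Suc k)" by blast
  show "Hn n = Hn (n - 1) + 2 * Pn (n - 1)" unfolding n using Hn_f Pn_f f_rec_H by simp
  show "Pn n = Hn (n - 1) + Pn (n - 1)" unfolding n using Hn_f Pn_f f_rec_P by simp
next
  fix n :: nat assume "3 \<le> n"
  then have "\<exists>k. n = Suc (Suc (Suc k))" by presburger
  then obtain k where n: "n = Suc (Suc (Suc k))" by blast
  have r: "f (Suc (Suc k)) False False = f (Suc k) False False + 2 * f (Suc k) True False"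
    "f (Suc k) False False = f k False False + 2 * f k True False"
    "f (Suc (Suc k)) True False = f (Suc k) False False + f (Suc k) True False"
    "f (Suc k) True False = f k False False + f k True False"
    using f_rec_H f_rec_P by blast+
  show "Hn n = 2 * Hn (n - 1) + Hn (n - 2)" unfolding n using Hn_f Pn_f r by simp
  show "Pn n = 2 * Pn (n - 1) + Pn (n - 2)" unfolding n using Hn_f Pn_f r by simp
next
  fix n :: nat assume "1 \<le> n"
  then have "\<exists>k. n = Suc k" by presburger
  then obtain k where n: "n = Suc k" by blast
  show "real (Pn n) = ((1 + sqrt 2) ^ n - (1 - sqrt 2) ^ n) / (2 * sqrt 2)"
    unfolding n Pn_f using closed by blast
  show "real (Hn n) = ((1 + sqrt 2) ^ n + (1 - sqrt 2) ^ n) / 2"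
    unfolding n Hn_f using closed by blast
qed

end
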